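(* Let $S(1),S(0)\in\{0,1\}$, a real-valued $Y(0)$ and a covariate vector $\mathbf{X}$ be random variables, and assume Strong Monotonicity, $S(0)=0$ almost surely. Suppose there is a constant $\varepsilon$ (not depending on $\mathbf{X}$) with $\varepsilon = E\{Y(0)\mid U=s\bar{s},\mathbf{X}\}/E\{Y(0)\mid U=\bar{s}\bar{s},\mathbf{X}\}$. Then for $u=s\bar{s}$ and $u=\bar{s}\bar{s}$, $$\varepsilon = \frac{E\{Y(0)\mid U=s\bar{s}, e_u(\mathbf{X})\}}{E\{Y(0)\mid U=\bar{s}\bar{s}, e_u(\mathbf{X})\}}.$$
   Context: The principal stratum is $U=(S(1),S(0))$, whose values $(1,1),(1,0),(0,1),(0,0)$ are labelled $ss, s\bar{s}, \bar{s}s, \bar{s}\bar{s}$. Principal scores: $e_u(\mathbf{X}) = \Pr(U=u\mid \mathbf{X})$. Expectations are assumed to exist and denominators to be nonzero. *)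

theory Defs
  imports "HOL-Probability.Probability"
begin

definition gen_sigma :: "'a measure \<Rightarrow> ('a \<Rightarrow> 'b) \<Rightarrow> 'b measure \<Rightarrow> 'a measure" where
  "gen_sigma M Z N = vimage_algebra (space M) Z N"

definition cond_exp_event :: "'a measure \<Rightarrow> 'a measure \<Rightarrow> ('a \<Rightarrow> real) \<Rightarrow> 'a set \<Rightarrow> 'a \<Rightarrow> real" where
  "cond_exp_event M F Y A = (\<lambda>\<omega>. real_cond_exp M F (\<lambda>w. Y w * indicator A w) \<omega>
                                   / real_cond_exp M F (indicator A) \<omega>)"

definition stratum_event :: "'a measure \<Rightarrow> ('a \<Rightarrow> nat) \<Rightarrow> ('a \<Rightarrow> nat) \<Rightarrow> nat \<times> nat \<Rightarrow> 'a set" where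
  "stratum_event M S1 S0 u = {\<omega> \<in> space M. (S1 \<omega>, S0 \<omega>) = u}"

definition is_principal_score ::
  "'a measure \<Rightarrow> ('a \<Rightarrow> nat) \<Rightarrow> ('a \<Rightarrow> nat) \<Rightarrow> ('a \<Rightarrow> 'x) \<Rightarrow> 'x measure \<Rightarrow> nat \<times> nat \<Rightarrow> ('x \<Rightarrow> real) \<Rightarrow> bool" where
  "is_principal_score M S1 S0 X MX u e \<longleftrightarrow>
     e \<in> borel_measurable MX \<and>
     (AE \<omega> in M. e (X \<omega>) = real_cond_exp M (gen_sigma M X MX) (indicator (stratum_event M S1 S0 u)) \<omega>)"

end

theory Submission imports Defs begin


lemma alg1: fixes a b mA mB e :: real
  assumes "a\<noteq>0" "b\<noteq>0" "mB/b \<noteq> 0" "e = (mA/a)/(mB/b)" shows "mA = e*a/b*mB"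
proof -
  have "mB \<noteq> 0" using assms by auto
  then show ?thesis using assms by (simp add: field_simps)
qed
lemma alg2: fixes q YB e :: real
  assumes "q\<noteq>0" "1-q\<noteq>0" "YB/(1-q) \<noteq> 0" shows "e = ((e*q/(1-q)*YB)/q)/(YB/(1-q))"
proof -
  have "YB \<noteq> 0" using assms by auto
  then show ?thesis using assms by (simp add: field_simps)
qed

lemma alg1': fixes a b q mA mB e :: real
  assumes "a = q" "b = 1 - q" "a\<noteq>0" "b\<noteq>0" "mB/b \<noteq> 0" "e = (mA/a)/(mB/b)"
  shows "mA = e*q/(1-q)*mB"
  using alg1[OF assms(3,4,5,6)] assms(1,2) by simp

lemma alg2': fixes cA cB YA YB a b q e :: real
  assumes "cA = q" "cB = 1 - q" "YA = e*q/(1-q)*YB" "a \<noteq> 0" "b \<noteq> 0" "a = q" "b = 1 - q"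
    "YB/cB \<noteq> 0"
  shows "e = (YA/cA)/(YB/cB)"
proof -
  have "q \<noteq> 0" "1 - q \<noteq> 0" "YB/(1-q) \<noteq> 0" using assms by auto
  from alg2[OF this, of e] show ?thesis using assms(1,2,3) by simp
qed

lemma vimage_sub:
  assumes "Z \<in> measurable N K" "space N = space M"
  shows "sets (vimage_algebra (space M) Z K) \<subseteq> sets N"
proof -
  have Zs: "Z \<in> space M \<rightarrow> space K"
    using measurable_space[OF assms(1)] unfolding assms(2) by (rule Pi_I)
  have pre: "\<And>A. A \<in> sets K \<Longrightarrow> Z -` A \<inter> space M \<in> sets N"
    using measurable_sets[OF assms(1)] unfolding assms(2) .
  show ?thesis unfolding sets_vimage_algebra2[OF Zs] using pre by blast
qed

lemma core:
  fixes M Fx G :: "'a measure" and Y q :: "'a \<Rightarrow> real" and \<epsilon> :: real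
  assumes ps: "prob_space M" and sFx: "subalgebra M Fx" and sG: "subalgebra Fx G"
    and qm: "q \<in> borel_measurable G"
    and Am: "A \<in> sets M" and Bm: "B \<in> sets M" and Yi: "integrable M Y"
    and pA: "AE w in M. real_cond_exp M Fx (indicator A) w = q w"
    and pB: "AE w in M. real_cond_exp M Fx (indicator B) w = 1 - q w"
    and nzA: "AE w in M. real_cond_exp M Fx (indicator A) w \<noteq> 0"
    and nzB: "AE w in M. real_cond_exp M Fx (indicator B) w \<noteq> 0"
    and nzR: "AE w in M. cond_exp_event M Fx Y B w \<noteq> 0"
    and eps: "AE w in M. \<epsilon> = cond_exp_event M Fx Y A w / cond_exp_event M Fx Y B w"
    and nzR': "AE w in M. cond_exp_event M G Y B w \<noteq> 0"
  shows "AE w in M. \<epsilon> = cond_exp_event M G Y A w / cond_exp_event M G Y B w"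
proof -
  interpret prob_space M by (rule ps)
  have sMG: "subalgebra M G" using sFx sG unfolding subalgebra_def by auto
  interpret X: sigma_finite_subalgebra M Fx
    by (intro finite_measure_subalgebra_is_sigma_finite finite_measure_subalgebra.intro
      finite_measure_axioms finite_measure_subalgebra_axioms.intro sFx)
  interpret G: sigma_finite_subalgebra M G
    by (intro finite_measure_subalgebra_is_sigma_finite finite_measure_subalgebra.intro
      finite_measure_axioms finite_measure_subalgebra_axioms.intro sMG)
  have qM[measurable]: "q \<in> borel_measurable M" using qm measurable_from_subalg[OF sMG] by blast
  have YM[measurable]: "Y \<in> borel_measurable M" using Yi by auto
  have [measurable]: "A \<in> sets M" "B \<in> sets M" using Am Bm by auto
  have iA: "integrable M (indicator A :: 'a \<Rightarrow> real)" by (rule integrable_real_indicator) (auto simp: Am top.not_eq_extremum[symmetric])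
  have iB: "integrable M (indicator B :: 'a \<Rightarrow> real)" by (rule integrable_real_indicator) (auto simp: Bm top.not_eq_extremum[symmetric])
  have iYA: "integrable M (\<lambda>w. Y w * indicator A w)"
    using integrable_mult_indicator[OF Am Yi] by (simp add: mult.commute)
  have iYB: "integrable M (\<lambda>w. Y w * indicator B w)"
    using integrable_mult_indicator[OF Bm Yi] by (simp add: mult.commute)
  have qi: "integrable M q"
    using integrable_cong_AE[OF _ qM pA] X.real_cond_exp_int(1)[OF iA] by auto
  have q1i: "integrable M (\<lambda>w. 1 - q w)" using qi by auto
  have q1m: "(\<lambda>w. 1 - q w) \<in> borel_measurable G" using qm by measurable
  have gA: "AE w in M. real_cond_exp M G (indicator A) w = q w"
  proof -
    have 1: "AE w in M. real_cond_exp M G (real_cond_exp M Fx (indicator A)) w = real_cond_exp M G (indicator A) w"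
      by (rule G.real_cond_exp_nested_subalg[OF sFx sG iA])
    have 2: "AE w in M. real_cond_exp M G (real_cond_exp M Fx (indicator A)) w = real_cond_exp M G q w"
      by (rule G.real_cond_exp_cong[OF pA]) (auto simp: qM)
    have 3: "AE w in M. real_cond_exp M G q w = q w" by (rule G.real_cond_exp_F_meas[OF qi qm])
    show ?thesis using 1 2 3 by eventually_elim auto
  qed
  have gB: "AE w in M. real_cond_exp M G (indicator B) w = 1 - q w"
  proof -
    have 1: "AE w in M. real_cond_exp M G (real_cond_exp M Fx (indicator B)) w = real_cond_exp M G (indicator B) w"
      by (rule G.real_cond_exp_nested_subalg[OF sFx sG iB])
    have 2: "AE w in M. real_cond_exp M G (real_cond_exp M Fx (indicator B)) w = real_cond_exp M G (\<lambda>w. 1 - q w) w"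
      by (rule G.real_cond_exp_cong[OF pB]) (auto simp: qM)
    have 3: "AE w in M. real_cond_exp M G (\<lambda>w. 1 - q w) w = 1 - q w" by (rule G.real_cond_exp_F_meas[OF q1i q1m])
    show ?thesis using 1 2 3 by eventually_elim auto
  qed
  define h where "h = (\<lambda>w. \<epsilon> * q w / (1 - q w))"
  have hm: "h \<in> borel_measurable G" unfolding h_def using qm by measurable
  let ?mA = "real_cond_exp M Fx (\<lambda>w. Y w * indicator A w)"
  let ?mB = "real_cond_exp M Fx (\<lambda>w. Y w * indicator B w)"
  have mAeq: "AE w in M. ?mA w = h w * ?mB w"
    using pA pB nzA nzB nzR eps
  proof eventually_elim
    case (elim w)
    show ?case unfolding h_def
      by (rule alg1'[OF elim(1) elim(2) elim(3) elim(4) elim(5)[unfolded cond_exp_event_def]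
            elim(6)[unfolded cond_exp_event_def]])
  qed
  have hM[measurable]: "h \<in> borel_measurable M" using measurable_from_subalg[OF sMG hm] .
  have hpm: "(\<lambda>w. h w * ?mB w) \<in> borel_measurable M" by measurable
  have hint: "integrable M (\<lambda>w. h w * ?mB w)"
    using integrable_cong_AE[OF _ hpm mAeq] X.real_cond_exp_int(1)[OF iYA] by auto
  have gYA: "AE w in M. real_cond_exp M G (\<lambda>w. Y w * indicator A w) w = h w * real_cond_exp M G (\<lambda>w. Y w * indicator B w) w"
  proof -
    have 1: "AE w in M. real_cond_exp M G ?mA w = real_cond_exp M G (\<lambda>w. Y w * indicator A w) w"
      by (rule G.real_cond_exp_nested_subalg[OF sFx sG iYA])
    have 2: "AE w in M. real_cond_exp M G ?mA w = real_cond_exp M G (\<lambda>w. h w * ?mB w) w"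
      by (rule G.real_cond_exp_cong[OF mAeq]) (auto intro: measurable_from_subalg[OF sMG hm])
    have 3: "AE w in M. real_cond_exp M G (\<lambda>w. h w * ?mB w) w = h w * real_cond_exp M G ?mB w"
      by (rule G.real_cond_exp_mult[OF hm _ hint]) auto
    have 4: "AE w in M. real_cond_exp M G ?mB w = real_cond_exp M G (\<lambda>w. Y w * indicator B w) w"
      by (rule G.real_cond_exp_nested_subalg[OF sFx sG iYB])
    show ?thesis using 1 2 3 4 by eventually_elim auto
  qed
  show ?thesis using gA gB gYA nzA nzB pA pB nzR'
  proof eventually_elim
    case (elim w)
    show ?case unfolding cond_exp_event_def
      by (rule alg2'[OF elim(1) elim(2) elim(3)[unfolded h_def] elim(4) elim(5) elim(6) elim(7)
          elim(8)[unfolded cond_exp_event_def]])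
  qed
qed


theorem lemmaA4:
  fixes M :: "'a measure" and MX :: "'x measure"
    and S1 S0 :: "'a \<Rightarrow> nat" and Y0 :: "'a \<Rightarrow> real" and X :: "'a \<Rightarrow> 'x"
    and \<epsilon> :: real
  assumes "prob_space M"
    and S1_meas: "S1 \<in> measurable M (count_space UNIV)"
    and S0_meas: "S0 \<in> measurable M (count_space UNIV)"
    and S1_bin: "\<forall>\<omega>\<in>space M. S1 \<omega> \<in> {0, 1}"
    and S0_bin: "\<forall>\<omega>\<in>space M. S0 \<omega> \<in> {0, 1}"
    and X_meas: "X \<in> measurable M MX"
    and Y0_int: "integrable M Y0"
    and strong_mono: "AE \<omega> in M. S0 \<omega> = 0"
    \<comment> \<open>denominators nonzero: Pr(U = u | X) for u = s sbar, sbar sbar\<close>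
    and nz_X_10: "AE \<omega> in M. real_cond_exp M (gen_sigma M X MX) (indicator (stratum_event M S1 S0 (1, 0))) \<omega> \<noteq> 0"
    and nz_X_00: "AE \<omega> in M. real_cond_exp M (gen_sigma M X MX) (indicator (stratum_event M S1 S0 (0, 0))) \<omega> \<noteq> 0"
    and nz_X_ratio: "AE \<omega> in M. cond_exp_event M (gen_sigma M X MX) Y0 (stratum_event M S1 S0 (0, 0)) \<omega> \<noteq> 0"
    and eps: "AE \<omega> in M. \<epsilon> = cond_exp_event M (gen_sigma M X MX) Y0 (stratum_event M S1 S0 (1, 0)) \<omega>
                              / cond_exp_event M (gen_sigma M X MX) Y0 (stratum_event M S1 S0 (0, 0)) \<omega>"
  shows "\<forall>u \<in> {(1, 0), (0, 0)}. \<forall>e. is_principal_score M S1 S0 X MX u e \<longrightarrow>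
           (let G = gen_sigma M (\<lambda>\<omega>. e (X \<omega>)) borel in
             ((AE \<omega> in M. real_cond_exp M G (indicator (stratum_event M S1 S0 (1, 0))) \<omega> \<noteq> 0)
              \<and> (AE \<omega> in M. real_cond_exp M G (indicator (stratum_event M S1 S0 (0, 0))) \<omega> \<noteq> 0)
              \<and> (AE \<omega> in M. cond_exp_event M G Y0 (stratum_event M S1 S0 (0, 0)) \<omega> \<noteq> 0))
             \<longrightarrow> (AE \<omega> in M. \<epsilon> = cond_exp_event M G Y0 (stratum_event M S1 S0 (1, 0)) \<omega>
                                   / cond_exp_event M G Y0 (stratum_event M S1 S0 (0, 0)) \<omega>))"
  proof (intro ballI allI impI)
  fix u e
  assume u: "u \<in> {(1, 0), (0, 0)}" and ps: "is_principal_score M S1 S0 X MX u e"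
  interpret prob_space M by fact
  define Fx where "Fx = gen_sigma M X MX"
  define G where "G = gen_sigma M (\<lambda>\<omega>. e (X \<omega>)) borel"
  define A where "A = stratum_event M S1 S0 (1, 0)"
  define B where "B = stratum_event M S1 S0 (0, 0)"
  have em: "e \<in> borel_measurable MX" using ps unfolding is_principal_score_def by auto
  have Am: "A \<in> sets M"
  proof -
    have "A = (S1 -` {1} \<inter> space M) \<inter> (S0 -` {0} \<inter> space M)" by (auto simp: A_def stratum_event_def)
    then show ?thesis by (auto intro!: sets.Int measurable_sets[OF S1_meas] measurable_sets[OF S0_meas])
  qed
  have Bm: "B \<in> sets M"
  proof -
    have "B = (S1 -` {0} \<inter> space M) \<inter> (S0 -` {0} \<inter> space M)" by (auto simp: B_def stratum_event_def)
    then show ?thesis by (auto intro!: sets.Int measurable_sets[OF S1_meas] measurable_sets[OF S0_meas])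
  qed
  have Xs: "X \<in> space M \<rightarrow> space MX" using measurable_space[OF X_meas] by (rule Pi_I)
  have sFx: "subalgebra M Fx" unfolding subalgebra_def Fx_def gen_sigma_def
    using vimage_sub[OF X_meas refl] by simp
  have XFx: "X \<in> measurable Fx MX" unfolding Fx_def gen_sigma_def
    by (rule measurable_vimage_algebra1[OF Xs])
  have eXFx: "(\<lambda>\<omega>. e (X \<omega>)) \<in> borel_measurable Fx" using measurable_compose[OF XFx em] .
  have sG: "subalgebra Fx G" unfolding subalgebra_def G_def gen_sigma_def
    using vimage_sub[OF eXFx] by (simp add: Fx_def gen_sigma_def)
  have eXG: "(\<lambda>\<omega>. e (X \<omega>)) \<in> borel_measurable G" unfolding G_def gen_sigma_def
    by (rule measurable_vimage_algebra1) auto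
  interpret Xs: sigma_finite_subalgebra M Fx
    by (intro finite_measure_subalgebra_is_sigma_finite finite_measure_subalgebra.intro
      finite_measure_axioms finite_measure_subalgebra_axioms.intro sFx)
  have iA: "integrable M (indicator A :: 'a \<Rightarrow> real)"
    by (rule integrable_real_indicator) (auto simp: Am top.not_eq_extremum[symmetric])
  have iB: "integrable M (indicator B :: 'a \<Rightarrow> real)"
    by (rule integrable_real_indicator) (auto simp: Bm top.not_eq_extremum[symmetric])
  have ind: "AE w in M. indicator A w + indicator B w = (\<lambda>w. 1::real) w"
    using strong_mono AE_space
  proof eventually_elim
    case (elim w)
    then show ?case using S1_bin unfolding A_def B_def stratum_event_def
      by (auto simp: indicator_def)
  qed
  have sum: "AE w in M. real_cond_exp M Fx (indicator A) w + real_cond_exp M Fx (indicator B) w = 1"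
  proof -
    have 1: "AE w in M. real_cond_exp M Fx (\<lambda>w. indicator A w + indicator B w) w
       = real_cond_exp M Fx (indicator A) w + real_cond_exp M Fx (indicator B) w"
      by (rule Xs.real_cond_exp_add[OF iA iB])
    have 2: "AE w in M. real_cond_exp M Fx (\<lambda>w. indicator A w + indicator B w) w
       = real_cond_exp M Fx (\<lambda>w. 1) w"
      by (rule Xs.real_cond_exp_cong[OF ind]) (auto intro!: borel_measurable_add borel_measurable_indicator Am Bm)
    have 3: "AE w in M. real_cond_exp M Fx (\<lambda>w. 1) w = (1::real)"
      by (rule Xs.real_cond_exp_F_meas[OF integrable_const borel_measurable_const])
    show ?thesis using 1 2 3 by eventually_elim auto
  qed
  have sc: "AE w in M. e (X w) = real_cond_exp M Fx (indicator (stratum_event M S1 S0 u)) w"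
    using ps unfolding is_principal_score_def Fx_def by (rule conjunct2)
  show "let G = gen_sigma M (\<lambda>\<omega>. e (X \<omega>)) borel in
             ((AE \<omega> in M. real_cond_exp M G (indicator (stratum_event M S1 S0 (1, 0))) \<omega> \<noteq> 0)
              \<and> (AE \<omega> in M. real_cond_exp M G (indicator (stratum_event M S1 S0 (0, 0))) \<omega> \<noteq> 0)
              \<and> (AE \<omega> in M. cond_exp_event M G Y0 (stratum_event M S1 S0 (0, 0)) \<omega> \<noteq> 0))
             \<longrightarrow> (AE \<omega> in M. \<epsilon> = cond_exp_event M G Y0 (stratum_event M S1 S0 (1, 0)) \<omega>
                                   / cond_exp_event M G Y0 (stratum_event M S1 S0 (0, 0)) \<omega>)"
    unfolding Let_def G_def[symmetric] A_def[symmetric] B_def[symmetric]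
  proof (intro impI)
    assume pre: "(AE \<omega> in M. real_cond_exp M G (indicator A) \<omega> \<noteq> 0) \<and>
      (AE \<omega> in M. real_cond_exp M G (indicator B) \<omega> \<noteq> 0) \<and>
      (AE \<omega> in M. cond_exp_event M G Y0 B \<omega> \<noteq> 0)"
    have nzA: "AE w in M. real_cond_exp M Fx (indicator A) w \<noteq> 0" using nz_X_10 unfolding Fx_def A_def .
    have nzB: "AE w in M. real_cond_exp M Fx (indicator B) w \<noteq> 0" using nz_X_00 unfolding Fx_def B_def .
    have nzR: "AE w in M. cond_exp_event M Fx Y0 B w \<noteq> 0" using nz_X_ratio unfolding Fx_def B_def .
    have eps': "AE w in M. \<epsilon> = cond_exp_event M Fx Y0 A w / cond_exp_event M Fx Y0 B w"
      using eps unfolding Fx_def A_def B_def .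
    from u show "AE \<omega> in M. \<epsilon> = cond_exp_event M G Y0 A \<omega> / cond_exp_event M G Y0 B \<omega>"
    proof
      assume "u = (1, 0)"
      then have sc': "AE w in M. real_cond_exp M Fx (indicator A) w = e (X w)"
        using sc unfolding A_def by auto
      have pB: "AE w in M. real_cond_exp M Fx (indicator B) w = 1 - e (X w)"
        using sc' sum by eventually_elim auto
      show ?thesis
        by (rule core[OF \<open>prob_space M\<close> sFx sG eXG Am Bm Y0_int sc' pB nzA nzB nzR eps'])
           (use pre in auto)
    next
      assume "u \<in> {(0, 0)}"
      then have sc': "AE w in M. real_cond_exp M Fx (indicator B) w = e (X w)"
        using sc unfolding B_def by auto
      have pA: "AE w in M. real_cond_exp M Fx (indicator A) w = 1 - e (X w)"
        using sc' sum by eventually_elim auto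
      have pB: "AE w in M. real_cond_exp M Fx (indicator B) w = 1 - (1 - e (X w))"
        using sc' by auto
      have qG: "(\<lambda>w. 1 - e (X w)) \<in> borel_measurable G" using eXG by measurable
      show ?thesis
        by (rule core[OF \<open>prob_space M\<close> sFx sG qG Am Bm Y0_int pA pB nzA nzB nzR eps'])
           (use pre in auto)
    qed
  qed
qed

end
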